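(* Let $\epsilon\in\{0,\frac12\}$. Every 2-local automorphism of $\mathrm{SVir}[\epsilon]$ is an automorphism of $\mathrm{SVir}[\epsilon]$.
   Context: For $\epsilon\in\{0,\frac12\}$, the super Virasoro algebra $\mathrm{SVir}[\epsilon]$ is the Lie superalgebra over $\mathbb{C}$ with basis $\{L_m, G_r, C : m\in\mathbb{Z}, r\in\mathbb{Z}+\epsilon\}$, even part spanned by the $L_m$ and $C$, odd part spanned by the $G_r$, and brackets $[L_m,L_n]=(m-n)L_{m+n}+\frac{1}{12}\delta_{m+n,0}(m^3-m)C$, $[L_m,G_r]=(\frac m2-r)G_{m+r}$, $[G_r,G_s]=2L_{r+s}+\frac13\delta_{r+s,0}(r^2-\frac14)C$, with $C$ central. An automorphism is an even bijective linear map preserving the bracket. A map $\phi:L\to L$ (not assumed linear) is a 2-local automorphism if for all $x,y\in L$ there is an automorphism $\theta_{x,y}$ of $L$ with $\phi(x)=\theta_{x,y}(x)$ and $\phi(y)=\theta_{x,y}(y)$. *)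

theory Defs
  imports Complex_Main
begin

text \<open>Basis of the (ambient) super Virasoro algebra: L m, G r, C.  Indices are real
  numbers; the algebra SVir[eps] is the span of L m (m integer), G r (r - eps integer) and C.\<close>
datatype sbasis = L real | G real | C

text \<open>Elements are complex-valued coefficient functions on the basis (finitely supported,
  see svir_carrier).\<close>
type_synonym svir = "sbasis \<Rightarrow> complex"

fun bb :: "sbasis \<Rightarrow> sbasis \<Rightarrow> svir" where
  "bb (L m) (L n) = (\<lambda>w. (if w = L (m + n) then complex_of_real (m - n) else 0)
       + (if w = C \<and> m + n = 0 then complex_of_real ((m^3 - m) / 12) else 0))"
| "bb (L m) (G r) = (\<lambda>w. if w = G (m + r) then complex_of_real (m / 2 - r) else 0)"
| "bb (G r) (L m) = (\<lambda>w. if w = G (m + r) then - complex_of_real (m / 2 - r) else 0)"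
| "bb (G r) (G s) = (\<lambda>w. (if w = L (r + s) then 2 else 0)
       + (if w = C \<and> r + s = 0 then complex_of_real ((r^2 - 1/4) / 3) else 0))"
| "bb C _ = (\<lambda>w. 0)"
| "bb _ C = (\<lambda>w. 0)"

definition supp :: "svir \<Rightarrow> sbasis set" where
  "supp x = {u. x u \<noteq> 0}"

definition sbracket :: "svir \<Rightarrow> svir \<Rightarrow> svir" where
  "sbracket x y = (\<lambda>w. \<Sum>u\<in>supp x. \<Sum>v\<in>supp y. x u * y v * bb u v w)"

definition svir_carrier :: "real \<Rightarrow> svir set" where
  "svir_carrier eps = {x. finite (supp x)
      \<and> (\<forall>m. x (L m) \<noteq> 0 \<longrightarrow> m \<in> \<int>)
      \<and> (\<forall>r. x (G r) \<noteq> 0 \<longrightarrow> r - eps \<in> \<int>)}"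

definition svir_even :: "svir \<Rightarrow> bool" where
  "svir_even x \<longleftrightarrow> (\<forall>r. x (G r) = 0)"

definition svir_odd :: "svir \<Rightarrow> bool" where
  "svir_odd x \<longleftrightarrow> (\<forall>m. x (L m) = 0) \<and> x C = 0"

definition svir_aut :: "real \<Rightarrow> (svir \<Rightarrow> svir) \<Rightarrow> bool" where
  "svir_aut eps \<theta> \<longleftrightarrow>
     bij_betw \<theta> (svir_carrier eps) (svir_carrier eps)
   \<and> (\<forall>x\<in>svir_carrier eps. \<forall>y\<in>svir_carrier eps. \<theta> (\<lambda>u. x u + y u) = (\<lambda>u. \<theta> x u + \<theta> y u))
   \<and> (\<forall>c. \<forall>x\<in>svir_carrier eps. \<theta> (\<lambda>u. c * x u) = (\<lambda>u. c * \<theta> x u))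
   \<and> (\<forall>x\<in>svir_carrier eps. svir_even x \<longrightarrow> svir_even (\<theta> x))
   \<and> (\<forall>x\<in>svir_carrier eps. svir_odd x \<longrightarrow> svir_odd (\<theta> x))
   \<and> (\<forall>x\<in>svir_carrier eps. \<forall>y\<in>svir_carrier eps.
        \<theta> (sbracket x y) = sbracket (\<theta> x) (\<theta> y))"

definition svir_2local_aut :: "real \<Rightarrow> (svir \<Rightarrow> svir) \<Rightarrow> bool" where
  "svir_2local_aut eps \<phi> \<longleftrightarrow>
     (\<forall>x\<in>svir_carrier eps. \<forall>y\<in>svir_carrier eps.
        \<exists>\<theta>. svir_aut eps \<theta> \<and> \<phi> x = \<theta> x \<and> \<phi> y = \<theta> y)"

end

theory Submission
  imports Defs
begin

definition e :: "sbasis \<Rightarrow> svir" where "e a = (\<lambda>w. if w = a then 1 else 0)"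

fun dg :: "sbasis \<Rightarrow> real" where
  "dg (L m) = m" | "dg (G r) = r" | "dg C = 0"

lemma sum_single:
  assumes "finite A" "a \<in> A" "\<And>x. x \<in> A \<Longrightarrow> x \<noteq> a \<Longrightarrow> f x = 0"
  shows "sum f A = f a"
proof -
  have "sum f A = f a + sum f (A - {a})" using assms by (simp add: sum.remove)
  also have "sum f (A - {a}) = 0" using assms by (intro sum.neutral) auto
  finally show ?thesis by simp
qed

lemma supp_e[simp]: "supp (e a) = {a}" by (auto simp: supp_def e_def)

lemma sbr_gen:
  assumes "finite U" "supp x \<subseteq> U" "finite V" "supp y \<subseteq> V"
  shows "sbracket x y w = (\<Sum>u\<in>U. \<Sum>v\<in>V. x u * y v * bb u v w)"
proof -
  have "sbracket x y w = (\<Sum>u\<in>U. \<Sum>v\<in>supp y. x u * y v * bb u v w)"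
    unfolding sbracket_def using assms by (intro sum.mono_neutral_left) (auto simp: supp_def)
  also have "\<dots> = (\<Sum>u\<in>U. \<Sum>v\<in>V. x u * y v * bb u v w)"
    using assms by (intro sum.cong refl sum.mono_neutral_left) (auto simp: supp_def)
  finally show ?thesis .
qed

lemma sbr_scaled: "sbracket (\<lambda>b. c * e a b) (\<lambda>b. d * e a' b) = (\<lambda>w. c * d * bb a a' w)"
proof
  fix w
  show "sbracket (\<lambda>b. c * e a b) (\<lambda>b. d * e a' b) w = c * d * bb a a' w"
    by (subst sbr_gen[where U="{a}" and V="{a'}"]) (auto simp: supp_def e_def)
qed

lemma sbr_e: "sbracket (e a) (e a') = bb a a'"
  using sbr_scaled[of 1 a 1 a'] by (simp add: e_def)

lemma bb_L0: "bb (L 0) v w = (if v = w then - of_real (dg v) else 0)"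
  by (cases v) auto

lemma sbr_L0C:
  assumes "finite (supp y)"
  shows "sbracket (\<lambda>b. \<alpha> * e (L 0) b + \<beta> * e C b) y = (\<lambda>w. \<alpha> * (- of_real (dg w)) * y w)"
proof
  fix w
  have "sbracket (\<lambda>b. \<alpha> * e (L 0) b + \<beta> * e C b) y w =
     (\<Sum>u\<in>{L 0, C}. \<Sum>v\<in>supp y. (\<alpha> * e (L 0) u + \<beta> * e C u) * y v * bb u v w)"
    using assms by (intro sbr_gen) (auto simp: supp_def e_def)
  also have "\<dots> = (\<Sum>v\<in>supp y. \<alpha> * y v * (if v = w then - of_real (dg v) else 0))"
    by (simp add: e_def bb_L0)
  also have "\<dots> = (\<Sum>v\<in>supp y. (if v = w then \<alpha> * y w * (- of_real (dg w)) else 0))"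
    by (intro sum.cong) auto
  also have "\<dots> = \<alpha> * (- of_real (dg w)) * y w"
    using assms by (simp add: supp_def)
  finally show "sbracket (\<lambda>b. \<alpha> * e (L 0) b + \<beta> * e C b) y w = \<alpha> * (- of_real (dg w)) * y w" .
qed

lemma sbr_L0:
  assumes "finite (supp y)"
  shows "sbracket (e (L 0)) y = (\<lambda>w. - of_real (dg w) * y w)"
proof -
  have "e (L 0) = (\<lambda>b. 1 * e (L 0) b + 0 * e C b)" by (auto simp: e_def)
  then show ?thesis using sbr_L0C[OF assms, of 1 0] by simp
qed

lemma supp_bb_LL: "supp (bb (L m) (L n)) \<subseteq> {L (m+n), C}"
  unfolding supp_def by auto
lemma supp_bb_LG: "supp (bb (L m) (G n)) \<subseteq> {G (m+n)}"
  unfolding supp_def by auto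
lemma supp_bb_GG: "supp (bb (G m) (G n)) \<subseteq> {L (m+n), C}"
  unfolding supp_def by auto
lemma supp_bb_GL: "supp (bb (G m) (L n)) \<subseteq> {G (n+m)}"
  unfolding supp_def by auto

lemma finite_supp_bb: "finite (supp (bb u v))"
proof (cases u; cases v)
  fix m n assume "u = L m" "v = L n" then show ?thesis using finite_subset[OF supp_bb_LL] by simp
next
  fix m n assume "u = L m" "v = G n" then show ?thesis using finite_subset[OF supp_bb_LG] by simp
next
  fix m n assume "u = G m" "v = L n" then show ?thesis using finite_subset[OF supp_bb_GL] by simp
next
  fix m n assume "u = G m" "v = G n" then show ?thesis using finite_subset[OF supp_bb_GG] by simp
qed (simp_all add: supp_def)

lemma supp_sbr_sub: "supp (sbracket x y) \<subseteq> (\<Union>u\<in>supp x. \<Union>v\<in>supp y. supp (bb u v))"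
proof
  fix w assume "w \<in> supp (sbracket x y)"
  then have "(\<Sum>u\<in>supp x. \<Sum>v\<in>supp y. x u * y v * bb u v w) \<noteq> 0"
    by (simp add: supp_def sbracket_def)
  then obtain u where u: "u \<in> supp x" "(\<Sum>v\<in>supp y. x u * y v * bb u v w) \<noteq> 0"
    by (meson sum.not_neutral_contains_not_neutral)
  then obtain v where "v \<in> supp y" "x u * y v * bb u v w \<noteq> 0"
    by (meson sum.not_neutral_contains_not_neutral)
  with u show "w \<in> (\<Union>u\<in>supp x. \<Union>v\<in>supp y. supp (bb u v))" by (auto simp: supp_def)
qed

lemma finite_supp_sbr: "finite (supp x) \<Longrightarrow> finite (supp y) \<Longrightarrow> finite (supp (sbracket x y))"
  by (rule finite_subset[OF supp_sbr_sub]) (auto intro: finite_supp_bb)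

definition valid :: "real \<Rightarrow> sbasis \<Rightarrow> bool" where
  "valid eps b = (case b of L m \<Rightarrow> m \<in> \<int> | G r \<Rightarrow> r - eps \<in> \<int> | C \<Rightarrow> True)"

lemma valid_simps[simp]: "valid eps (L m) = (m \<in> \<int>)" "valid eps (G r) = (r - eps \<in> \<int>)" "valid eps C"
  by (auto simp: valid_def)

lemma car_iff: "x \<in> svir_carrier eps \<longleftrightarrow> finite (supp x) \<and> (\<forall>b\<in>supp x. valid eps b)"
  unfolding svir_carrier_def supp_def
  by (auto simp: valid_def split: sbasis.splits)

lemma car_valid: "x \<in> svir_carrier eps \<Longrightarrow> x b \<noteq> 0 \<Longrightarrow> valid eps b"
  by (auto simp: car_iff supp_def)

lemma car_finite: "x \<in> svir_carrier eps \<Longrightarrow> finite (supp x)"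
  by (auto simp: car_iff)

lemma e_car[simp]: "e b \<in> svir_carrier eps \<longleftrightarrow> valid eps b"
  by (auto simp: car_iff)

lemma car_zero[simp]: "(\<lambda>w. 0) \<in> svir_carrier eps"
  by (auto simp: car_iff supp_def)

lemma car_add[intro]: "x \<in> svir_carrier eps \<Longrightarrow> y \<in> svir_carrier eps \<Longrightarrow> (\<lambda>u. x u + y u) \<in> svir_carrier eps"
proof -
  assume a: "x \<in> svir_carrier eps" "y \<in> svir_carrier eps"
  have "supp (\<lambda>u. x u + y u) \<subseteq> supp x \<union> supp y" by (auto simp: supp_def)
  with a show ?thesis unfolding car_iff by (meson Un_iff finite_UnI finite_subset subsetD)
qed

lemma car_smult[intro]: "x \<in> svir_carrier eps \<Longrightarrow> (\<lambda>u. c * x u) \<in> svir_carrier eps"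
proof -
  assume a: "x \<in> svir_carrier eps"
  have "supp (\<lambda>u. c * x u) \<subseteq> supp x" by (auto simp: supp_def)
  with a show ?thesis unfolding car_iff by (meson finite_subset subsetD)
qed

lemma Ints_2eps: "(eps::real) = 0 \<or> eps = 1/2 \<Longrightarrow> 2 * eps \<in> \<int>"
proof -
  assume "eps = 0 \<or> eps = 1/2"
  then have "2 * eps = 0 \<or> 2 * eps = 1" by auto
  then show ?thesis by (metis Ints_0 Ints_1)
qed

lemma valid_bb:
  assumes g: "eps = 0 \<or> eps = 1/2" and u: "valid eps u" and v: "valid eps v" and w: "w \<in> supp (bb u v)"
  shows "valid eps w"
proof (cases u)
  case (L m)
  note um = this
  show ?thesis
  proof (cases v)
    case (L n)
    then have "w \<in> {L (m+n), C}" using supp_bb_LL w um by auto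
    moreover have "m + n \<in> \<int>" using u v um L by simp
    ultimately show ?thesis by auto
  next
    case (G n)
    then have "w = G (m+n)" using supp_bb_LG w um by auto
    moreover have "m + (n - eps) \<in> \<int>" using u v um G by (simp add: Ints_add)
    ultimately show ?thesis by (simp add: add_diff_eq)
  next
    case C then show ?thesis using w um by (simp add: supp_def)
  qed
next
  case (G m)
  note um = this
  show ?thesis
  proof (cases v)
    case (L n)
    then have "w = G (n+m)" using supp_bb_GL w um by auto
    moreover have "n + (m - eps) \<in> \<int>" using u v um L by (simp add: Ints_add)
    ultimately show ?thesis by (simp add: add_diff_eq)
  next
    case (G n)
    then have "w \<in> {L (m+n), C}" using supp_bb_GG w um by auto
    moreover have "(m - eps) + (n - eps) + 2 * eps \<in> \<int>" using u v um G Ints_2eps[OF g] by (intro Ints_add) auto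
    then have "m + n \<in> \<int>" by simp
    ultimately show ?thesis by auto
  next
    case C then show ?thesis using w um by (simp add: supp_def)
  qed
next
  case C then show ?thesis using w by (simp add: supp_def)
qed

lemma car_sbr[intro]:
  assumes g: "eps = 0 \<or> eps = 1/2" and x: "x \<in> svir_carrier eps" and y: "y \<in> svir_carrier eps"
  shows "sbracket x y \<in> svir_carrier eps"
  unfolding car_iff
proof
  show "finite (supp (sbracket x y))" using x y by (intro finite_supp_sbr) (auto simp: car_iff)
  show "\<forall>b\<in>supp (sbracket x y). valid eps b"
  proof
    fix b assume "b \<in> supp (sbracket x y)"
    then obtain u v where uv: "u \<in> supp x" "v \<in> supp y" "b \<in> supp (bb u v)" using supp_sbr_sub by blast
    have "valid eps u" using x uv(1) by (simp add: car_iff)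
    moreover have "valid eps v" using y uv(2) by (simp add: car_iff)
    ultimately show "valid eps b" using valid_bb[OF g _ _ uv(3)] by blast
  qed
qed

lemma expand:
  assumes "finite S" "supp u \<subseteq> S"
  shows "u = (\<lambda>w. \<Sum>b\<in>S. u b * e b w)"
proof
  fix w
  have "(\<Sum>b\<in>S. u b * e b w) = (\<Sum>b\<in>S. if b = w then u w else 0)"
    by (intro sum.cong) (auto simp: e_def)
  also have "\<dots> = (if w \<in> S then u w else 0)" using assms(1) by (simp add: sum.delta')
  also have "\<dots> = u w" using assms(2) by (auto simp: supp_def)
  finally show "u w = (\<Sum>b\<in>S. u b * e b w)" by simp
qed

lemma car_sum:
  assumes "finite S" "\<forall>b\<in>S. f b \<in> svir_carrier eps"
  shows "(\<lambda>w. \<Sum>b\<in>S. c b * f b w) \<in> svir_carrier eps"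
  using assms
proof (induction S rule: finite_induct)
  case empty then show ?case by simp
next
  case (insert a' S')
  then have "(\<lambda>u. (\<lambda>u. c a' * f a' u) u + (\<lambda>w. \<Sum>b\<in>S'. c b * f b w) u) \<in> svir_carrier eps"
    by (intro car_add car_smult) auto
  then show ?case using insert by simp
qed

definition evp :: "svir \<Rightarrow> svir" where "evp z = (\<lambda>b. case b of G r \<Rightarrow> 0 | _ \<Rightarrow> z b)"
definition odp :: "svir \<Rightarrow> svir" where "odp z = (\<lambda>b. case b of G r \<Rightarrow> z b | _ \<Rightarrow> 0)"

lemma parity_split:
  assumes z: "z \<in> svir_carrier eps"
  shows "evp z \<in> svir_carrier eps" "odp z \<in> svir_carrier eps" "z = (\<lambda>u. evp z u + odp z u)"
     "svir_even (evp z)" "svir_odd (odp z)"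
proof -
  have a1: "evp z x \<noteq> 0 \<Longrightarrow> z x \<noteq> 0" for x by (cases x) (auto simp: evp_def)
  have a2: "odp z x \<noteq> 0 \<Longrightarrow> z x \<noteq> 0" for x by (cases x) (auto simp: odp_def)
  have "supp (evp z) \<subseteq> supp z" "supp (odp z) \<subseteq> supp z"
    using a1 a2 by (auto simp: supp_def)
  moreover have "finite (supp z)" "\<forall>b\<in>supp z. valid eps b" using z by (auto simp: car_iff)
  ultimately show "evp z \<in> svir_carrier eps" "odp z \<in> svir_carrier eps"
    unfolding car_iff by (auto intro: finite_subset)
  show "z = (\<lambda>u. evp z u + odp z u)"
  proof
    fix u show "z u = evp z u + odp z u" by (cases u) (auto simp: evp_def odp_def)
  qed
  show "svir_even (evp z)" "svir_odd (odp z)" by (auto simp: evp_def odp_def svir_even_def svir_odd_def)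
qed

context
  fixes eps :: real and \<sigma> :: "svir \<Rightarrow> svir"
  assumes A: "svir_aut eps \<sigma>"
begin

lemma aut_bij: "bij_betw \<sigma> (svir_carrier eps) (svir_carrier eps)"
  using A by (simp add: svir_aut_def)
lemma aut_car: "x \<in> svir_carrier eps \<Longrightarrow> \<sigma> x \<in> svir_carrier eps"
  using aut_bij bij_betwE by blast
lemma aut_inj: "x \<in> svir_carrier eps \<Longrightarrow> y \<in> svir_carrier eps \<Longrightarrow> \<sigma> x = \<sigma> y \<Longrightarrow> x = y"
  using aut_bij unfolding bij_betw_def inj_on_def by blast
lemma aut_surj: "z \<in> svir_carrier eps \<Longrightarrow> \<exists>x\<in>svir_carrier eps. \<sigma> x = z"
proof -
  assume "z \<in> svir_carrier eps"
  then have "z \<in> \<sigma> ` svir_carrier eps" using aut_bij unfolding bij_betw_def by simp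
  then show ?thesis by blast
qed
lemma aut_add: "x \<in> svir_carrier eps \<Longrightarrow> y \<in> svir_carrier eps \<Longrightarrow> \<sigma> (\<lambda>u. x u + y u) = (\<lambda>u. \<sigma> x u + \<sigma> y u)"
  using A by (simp add: svir_aut_def)
lemma aut_smult: "x \<in> svir_carrier eps \<Longrightarrow> \<sigma> (\<lambda>u. c * x u) = (\<lambda>u. c * \<sigma> x u)"
  using A by (simp add: svir_aut_def)
lemma aut_even: "x \<in> svir_carrier eps \<Longrightarrow> svir_even x \<Longrightarrow> svir_even (\<sigma> x)"
  using A by (simp add: svir_aut_def)
lemma aut_odd: "x \<in> svir_carrier eps \<Longrightarrow> svir_odd x \<Longrightarrow> svir_odd (\<sigma> x)"
  using A by (simp add: svir_aut_def)
lemma aut_br: "x \<in> svir_carrier eps \<Longrightarrow> y \<in> svir_carrier eps \<Longrightarrow> \<sigma> (sbracket x y) = sbracket (\<sigma> x) (\<sigma> y)"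
  using A by (simp add: svir_aut_def)

lemma aut_zero: "\<sigma> (\<lambda>w. 0) = (\<lambda>w. 0)"
  using aut_smult[of "\<lambda>w. 0" 0] by simp

lemma aut_zero_iff: "x \<in> svir_carrier eps \<Longrightarrow> \<sigma> x = (\<lambda>w. 0) \<longleftrightarrow> x = (\<lambda>w. 0)"
  using aut_inj[of x "\<lambda>w. 0"] aut_zero by auto

lemma aut_lin_sum:
  assumes "finite S" "\<forall>b\<in>S. f b \<in> svir_carrier eps"
  shows "\<sigma> (\<lambda>w. \<Sum>b\<in>S. c b * f b w) = (\<lambda>w. \<Sum>b\<in>S. c b * \<sigma> (f b) w)"
  using assms
proof (induction S rule: finite_induct)
  case empty
  then show ?case using aut_zero by simp
next
  case (insert a S)
  have s: "(\<lambda>w. \<Sum>b\<in>S. c b * f b w) \<in> svir_carrier eps"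
    using insert by (intro car_sum) auto
  have fa: "f a \<in> svir_carrier eps" using insert by auto
  have "(\<lambda>w. \<Sum>b\<in>insert a S. c b * f b w) = (\<lambda>u. (\<lambda>u. c a * f a u) u + (\<lambda>w. \<Sum>b\<in>S. c b * f b w) u)"
    using insert by simp
  then have "\<sigma> (\<lambda>w. \<Sum>b\<in>insert a S. c b * f b w) = (\<lambda>u. \<sigma> (\<lambda>u. c a * f a u) u + \<sigma> (\<lambda>w. \<Sum>b\<in>S. c b * f b w) u)"
    using aut_add[OF car_smult[OF fa] s] by simp
  also have "\<dots> = (\<lambda>u. c a * \<sigma> (f a) u + (\<Sum>b\<in>S. c b * \<sigma> (f b) u))"
    using aut_smult[OF fa] insert by simp
  also have "\<dots> = (\<lambda>w. \<Sum>b\<in>insert a S. c b * \<sigma> (f b) w)" using insert by simp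
  finally show ?case .
qed

lemma aut_expand:
  assumes "u \<in> svir_carrier eps" "finite S" "supp u \<subseteq> S" "\<forall>b\<in>S. valid eps b"
  shows "\<sigma> u = (\<lambda>w. \<Sum>b\<in>S. u b * \<sigma> (e b) w)"
proof -
  have "\<sigma> u = \<sigma> (\<lambda>w. \<Sum>b\<in>S. u b * e b w)" using expand[OF assms(2,3)] by simp
  also have "\<dots> = (\<lambda>w. \<Sum>b\<in>S. u b * \<sigma> (e b) w)" using assms by (intro aut_lin_sum) auto
  finally show ?thesis .
qed

lemma supp_aut_sub:
  assumes "u \<in> svir_carrier eps" "finite S" "supp u \<subseteq> S" "\<forall>b\<in>S. valid eps b"
  shows "supp (\<sigma> u) \<subseteq> (\<Union>b\<in>S. supp (\<sigma> (e b)))"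
proof
  fix w assume "w \<in> supp (\<sigma> u)"
  then have "(\<Sum>b\<in>S. u b * \<sigma> (e b) w) \<noteq> 0" using aut_expand[OF assms] by (simp add: supp_def)
  then obtain b where "b \<in> S" "u b * \<sigma> (e b) w \<noteq> 0" by (meson sum.not_neutral_contains_not_neutral)
  then show "w \<in> (\<Union>b\<in>S. supp (\<sigma> (e b)))" by (auto simp: supp_def)
qed

lemma reflect_even:
  assumes z: "z \<in> svir_carrier eps" and ev: "svir_even (\<sigma> z)"
  shows "svir_even z"
proof -
  define ze where "ze = evp z"
  define zo where "zo = odp z"
  note ps = parity_split[OF z, folded ze_def zo_def]
  have sz: "\<sigma> z = (\<lambda>u. \<sigma> ze u + \<sigma> zo u)" using aut_add[OF ps(1,2)] ps(3) by metis
  have e1: "svir_even (\<sigma> ze)" using aut_even ps by auto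
  have o1: "svir_odd (\<sigma> zo)" using aut_odd ps by auto
  have "\<sigma> zo = (\<lambda>w. 0)"
  proof
    fix w show "\<sigma> zo w = 0"
    proof (cases w)
      case (G r)
      have "\<sigma> z (G r) = 0" using ev by (simp add: svir_even_def)
      moreover have "\<sigma> ze (G r) = 0" using e1 by (simp add: svir_even_def)
      ultimately show ?thesis using G sz by (metis add_0 )
    qed (use o1 in \<open>auto simp: svir_odd_def\<close>)
  qed
  then have "zo = (\<lambda>w. 0)" using aut_zero_iff ps(2) by blast
  then show ?thesis using ps(3,4) by (simp add: svir_even_def)
qed

lemma reflect_odd:
  assumes z: "z \<in> svir_carrier eps" and od: "svir_odd (\<sigma> z)"
  shows "svir_odd z"
proof -
  define ze where "ze = evp z"
  define zo where "zo = odp z"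
  note ps = parity_split[OF z, folded ze_def zo_def]
  have sz: "\<sigma> z = (\<lambda>u. \<sigma> ze u + \<sigma> zo u)" using aut_add[OF ps(1,2)] ps(3) by metis
  have e1: "svir_even (\<sigma> ze)" using aut_even ps by auto
  have o1: "svir_odd (\<sigma> zo)" using aut_odd ps by auto
  have "\<sigma> ze = (\<lambda>w. 0)"
  proof
    fix w show "\<sigma> ze w = 0"
    proof (cases w)
      case (L m)
      have "\<sigma> z (L m) = 0" using od by (simp add: svir_odd_def)
      moreover have "\<sigma> zo (L m) = 0" using o1 by (simp add: svir_odd_def)
      ultimately show ?thesis using L sz by (metis add_0_right)
    next
      case C
      have "\<sigma> z C = 0" using od by (simp add: svir_odd_def)
      moreover have "\<sigma> zo C = 0" using o1 by (simp add: svir_odd_def)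
      ultimately show ?thesis using C sz by (metis add_0_right)
    qed (use e1 in \<open>auto simp: svir_even_def\<close>)
  qed
  then have "ze = (\<lambda>w. 0)" using aut_zero_iff ps(1) by blast
  then show ?thesis using ps(3,5) by (simp add: svir_odd_def)
qed

end

lemma aut_inv:
  assumes g: "eps = 0 \<or> eps = 1/2" and A: "svir_aut eps \<sigma>"
  shows "svir_aut eps (inv_into (svir_carrier eps) \<sigma>)"
proof -
  let ?K = "svir_carrier eps" and ?i = "inv_into (svir_carrier eps) \<sigma>"
  have b: "bij_betw ?i ?K ?K" using aut_bij[OF A] by (rule bij_betw_inv_into)
  have ic: "\<And>x. x \<in> ?K \<Longrightarrow> ?i x \<in> ?K" using b bij_betwE by blast
  have si: "\<And>x. x \<in> ?K \<Longrightarrow> \<sigma> (?i x) = x"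
    using bij_betw_inv_into_right[OF aut_bij[OF A]] by blast
  have inj: "\<And>x y. x \<in> ?K \<Longrightarrow> y \<in> ?K \<Longrightarrow> \<sigma> x = \<sigma> y \<Longrightarrow> x = y" using aut_inj[OF A] by blast
  show ?thesis unfolding svir_aut_def
  proof (intro conjI ballI allI impI)
    show "bij_betw ?i ?K ?K" by (fact b)
  next
    fix x y assume x: "x \<in> ?K" and y: "y \<in> ?K"
    have "\<sigma> (\<lambda>u. ?i x u + ?i y u) = (\<lambda>u. x u + y u)" using aut_add[OF A ic[OF x] ic[OF y]] si x y by simp
    moreover have "\<sigma> (?i (\<lambda>u. x u + y u)) = (\<lambda>u. x u + y u)" using si[OF car_add[OF x y]] .
    ultimately show "?i (\<lambda>u. x u + y u) = (\<lambda>u. ?i x u + ?i y u)"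
      using inj[OF ic[OF car_add[OF x y]] car_add[OF ic[OF x] ic[OF y]]] by simp
  next
    fix c x assume x: "x \<in> ?K"
    have "\<sigma> (\<lambda>u. c * ?i x u) = (\<lambda>u. c * x u)" using aut_smult[OF A ic[OF x]] si x by simp
    moreover have "\<sigma> (?i (\<lambda>u. c * x u)) = (\<lambda>u. c * x u)" using si[OF car_smult[OF x]] .
    ultimately show "?i (\<lambda>u. c * x u) = (\<lambda>u. c * ?i x u)"
      using inj[OF ic[OF car_smult[OF x]] car_smult[OF ic[OF x]]] by simp
  next
    fix x assume x: "x \<in> ?K" and "svir_even x"
    then show "svir_even (?i x)" using reflect_even[OF A ic[OF x]] si by simp
  next
    fix x assume x: "x \<in> ?K" and "svir_odd x"
    then show "svir_odd (?i x)" using reflect_odd[OF A ic[OF x]] si by simp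
  next
    fix x y assume x: "x \<in> ?K" and y: "y \<in> ?K"
    have "\<sigma> (sbracket (?i x) (?i y)) = sbracket x y" using aut_br[OF A ic[OF x] ic[OF y]] si x y by simp
    moreover have "\<sigma> (?i (sbracket x y)) = sbracket x y" using si[OF car_sbr[OF g x y]] .
    ultimately show "?i (sbracket x y) = sbracket (?i x) (?i y)"
      using inj[OF ic[OF car_sbr[OF g x y]] car_sbr[OF g ic[OF x] ic[OF y]]] by simp
  qed
qed

lemma aut_comp:
  assumes A: "svir_aut eps \<sigma>" and B: "svir_aut eps \<tau>"
  shows "svir_aut eps (\<lambda>x. \<sigma> (\<tau> x))"
  unfolding svir_aut_def
proof (intro conjI ballI allI impI)
  show "bij_betw (\<lambda>x. \<sigma> (\<tau> x)) (svir_carrier eps) (svir_carrier eps)"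
    using bij_betw_trans[OF aut_bij[OF B] aut_bij[OF A]] by (simp add: comp_def)
next
  fix x y assume x: "x \<in> svir_carrier eps" and y: "y \<in> svir_carrier eps"
  show "\<sigma> (\<tau> (\<lambda>u. x u + y u)) = (\<lambda>u. \<sigma> (\<tau> x) u + \<sigma> (\<tau> y) u)"
    using aut_add[OF B x y] aut_add[OF A aut_car[OF B x] aut_car[OF B y]] by simp
  show "\<sigma> (\<tau> (sbracket x y)) = sbracket (\<sigma> (\<tau> x)) (\<sigma> (\<tau> y))"
    using aut_br[OF B x y] aut_br[OF A aut_car[OF B x] aut_car[OF B y]] by simp
next
  fix c x assume x: "x \<in> svir_carrier eps"
  show "\<sigma> (\<tau> (\<lambda>u. c * x u)) = (\<lambda>u. c * \<sigma> (\<tau> x) u)"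
    using aut_smult[OF B x] aut_smult[OF A aut_car[OF B x]] by simp
next
  fix x assume x: "x \<in> svir_carrier eps"
  { assume "svir_even x" then show "svir_even (\<sigma> (\<tau> x))"
      using aut_even[OF B x] aut_even[OF A aut_car[OF B x]] by simp }
  { assume "svir_odd x" then show "svir_odd (\<sigma> (\<tau> x))"
      using aut_odd[OF B x] aut_odd[OF A aut_car[OF B x]] by simp }
qed

lemma aut_transfer:
  assumes g: "eps = 0 \<or> eps = 1/2" and A: "svir_aut eps \<tau>" and eq: "\<forall>y\<in>svir_carrier eps. \<phi> y = \<tau> y"
  shows "svir_aut eps \<phi>"
  unfolding svir_aut_def
proof (intro conjI ballI allI impI)
  show "bij_betw \<phi> (svir_carrier eps) (svir_carrier eps)"
  proof -
    have "bij_betw \<phi> (svir_carrier eps) (svir_carrier eps) = bij_betw \<tau> (svir_carrier eps) (svir_carrier eps)"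
      by (rule bij_betw_cong) (use eq in auto)
    then show ?thesis using aut_bij[OF A] by simp
  qed
next
  fix x y assume x: "x \<in> svir_carrier eps" and y: "y \<in> svir_carrier eps"
  show "\<phi> (\<lambda>u. x u + y u) = (\<lambda>u. \<phi> x u + \<phi> y u)"
    using aut_add[OF A x y] eq x y car_add[OF x y] by simp
  show "\<phi> (sbracket x y) = sbracket (\<phi> x) (\<phi> y)"
    using aut_br[OF A x y] eq x y car_sbr[OF g x y] by simp
next
  fix c x assume x: "x \<in> svir_carrier eps"
  show "\<phi> (\<lambda>u. c * x u) = (\<lambda>u. c * \<phi> x u)"
    using aut_smult[OF A x] eq x car_smult[OF x] by simp
next
  fix x assume x: "x \<in> svir_carrier eps"
  { assume "svir_even x" then show "svir_even (\<phi> x)" using aut_even[OF A x] eq x by simp }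
  { assume "svir_odd x" then show "svir_odd (\<phi> x)" using aut_odd[OF A x] eq x by simp }
qed

definition lco :: "sbasis \<Rightarrow> sbasis \<Rightarrow> real \<Rightarrow> complex" where
  "lco u v n = (case u of L a \<Rightarrow> (case v of L b \<Rightarrow> if n = a + b then of_real (a - b) else 0 | _ \<Rightarrow> 0) | _ \<Rightarrow> 0)"

lemma bb_lco: "(\<forall>r. u \<noteq> G r) \<Longrightarrow> bb u v (L n) = lco u v n"
  by (cases u; cases v) (auto simp: lco_def)

lemma sbr_Lcoef:
  assumes "finite (supp x)" "finite (supp y)" "\<forall>r. x (G r) = 0"
  shows "sbracket x y (L n) = (\<Sum>u\<in>supp x. \<Sum>v\<in>supp y. x u * y v * lco u v n)"
proof -
  have "sbracket x y (L n) = (\<Sum>u\<in>supp x. \<Sum>v\<in>supp y. x u * y v * bb u v (L n))"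
    using assms by (intro sbr_gen) auto
  also have "\<dots> = (\<Sum>u\<in>supp x. \<Sum>v\<in>supp y. x u * y v * lco u v n)"
  proof (intro sum.cong refl)
    fix u v assume "u \<in> supp x"
    then have "\<forall>r. u \<noteq> G r" using assms(3) by (auto simp: supp_def)
    then show "x u * y v * bb u v (L n) = x u * y v * lco u v n" by (simp add: bb_lco)
  qed
  finally show ?thesis .
qed

lemma lco_nz: "lco u v n \<noteq> 0 \<Longrightarrow> \<exists>a b. u = L a \<and> v = L b \<and> n = a + b"
  by (auto simp: lco_def split: sbasis.splits if_splits)

lemma sbr_top_zero:
  assumes "finite (supp x)" "finite (supp y)" "\<forall>r. x (G r) = 0"
    and "\<forall>a>K. x (L a) = 0" "\<forall>b>M. y (L b) = 0" "n > K + M"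
  shows "sbracket x y (L n) = 0"
proof -
  have z: "x u * y v * lco u v n = 0" for u v
  proof (rule ccontr)
    assume h: "x u * y v * lco u v n \<noteq> 0"
    then obtain a b where ab: "u = L a" "v = L b" "n = a + b" using lco_nz by fastforce
    have "a \<le> K" using h ab assms(4) by (metis mult_zero_left not_less)
    moreover have "b \<le> M" using h ab assms(5) by (metis mult_zero_left mult_zero_right not_less)
    ultimately show False using ab assms(6) by linarith
  qed
  show ?thesis unfolding sbr_Lcoef[OF assms(1-3)] by (simp only: z sum.neutral_const)
qed

lemma sbr_top_lead:
  assumes fx: "finite (supp x)" and fy: "finite (supp y)" and xG: "\<forall>r. x (G r) = 0"
    and xK: "\<forall>a>K. x (L a) = 0" and yM: "\<forall>b>M. y (L b) = 0" and x0: "x (L K) \<noteq> 0" and y0: "y (L M) \<noteq> 0"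
  shows "sbracket x y (L (K + M)) = x (L K) * y (L M) * of_real (K - M)"
proof -
  have t0: "x u * y v * lco u v (K + M) = 0" if "\<not> (u = L K \<and> v = L M)" for u v
  proof (rule ccontr)
    assume h: "x u * y v * lco u v (K + M) \<noteq> 0"
    then obtain a b where ab: "u = L a" "v = L b" "K + M = a + b" using lco_nz by fastforce
    have "a \<le> K" using h ab xK by (metis mult_zero_left not_less)
    moreover have "b \<le> M" using h ab yM by (metis mult_zero_left mult_zero_right not_less)
    ultimately have "a = K" "b = M" using ab by linarith+
    then show False using that ab by simp
  qed
  have inK: "L K \<in> supp x" and inM: "L M \<in> supp y" using x0 y0 by (auto simp: supp_def)
  have "sbracket x y (L (K + M)) = (\<Sum>u\<in>supp x. \<Sum>v\<in>supp y. x u * y v * lco u v (K + M))"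
    by (rule sbr_Lcoef[OF fx fy xG])
  also have "\<dots> = (\<Sum>v\<in>supp y. x (L K) * y v * lco (L K) v (K + M))"
    by (rule sum_single[OF fx inK]) (use t0 in \<open>auto intro: sum.neutral\<close>)
  also have "\<dots> = x (L K) * y (L M) * lco (L K) (L M) (K + M)"
    by (rule sum_single[OF fy inM]) (use t0 in auto)
  also have "\<dots> = x (L K) * y (L M) * of_real (K - M)" by (simp add: lco_def)
  finally show ?thesis .
qed

lemma sbr_bot_zero:
  assumes "finite (supp x)" "finite (supp y)" "\<forall>r. x (G r) = 0"
    and "\<forall>a<K. x (L a) = 0" "\<forall>b<M. y (L b) = 0" "n < K + M"
  shows "sbracket x y (L n) = 0"
proof -
  have z: "x u * y v * lco u v n = 0" for u v
  proof (rule ccontr)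
    assume h: "x u * y v * lco u v n \<noteq> 0"
    then obtain a b where ab: "u = L a" "v = L b" "n = a + b" using lco_nz by fastforce
    have "a \<ge> K" using h ab assms(4) by (metis mult_zero_left not_less)
    moreover have "b \<ge> M" using h ab assms(5) by (metis mult_zero_left mult_zero_right not_less)
    ultimately show False using ab assms(6) by linarith
  qed
  show ?thesis unfolding sbr_Lcoef[OF assms(1-3)] by (simp only: z sum.neutral_const)
qed

lemma sbr_bot_lead:
  assumes fx: "finite (supp x)" and fy: "finite (supp y)" and xG: "\<forall>r. x (G r) = 0"
    and xK: "\<forall>a<K. x (L a) = 0" and yM: "\<forall>b<M. y (L b) = 0" and x0: "x (L K) \<noteq> 0" and y0: "y (L M) \<noteq> 0"
  shows "sbracket x y (L (K + M)) = x (L K) * y (L M) * of_real (K - M)"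
proof -
  have t0: "x u * y v * lco u v (K + M) = 0" if "\<not> (u = L K \<and> v = L M)" for u v
  proof (rule ccontr)
    assume h: "x u * y v * lco u v (K + M) \<noteq> 0"
    then obtain a b where ab: "u = L a" "v = L b" "K + M = a + b" using lco_nz by fastforce
    have "a \<ge> K" using h ab xK by (metis mult_zero_left not_less)
    moreover have "b \<ge> M" using h ab yM by (metis mult_zero_left mult_zero_right not_less)
    ultimately have "a = K" "b = M" using ab by linarith+
    then show False using that ab by simp
  qed
  have inK: "L K \<in> supp x" and inM: "L M \<in> supp y" using x0 y0 by (auto simp: supp_def)
  have "sbracket x y (L (K + M)) = (\<Sum>u\<in>supp x. \<Sum>v\<in>supp y. x u * y v * lco u v (K + M))"
    by (rule sbr_Lcoef[OF fx fy xG])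
  also have "\<dots> = (\<Sum>v\<in>supp y. x (L K) * y v * lco (L K) v (K + M))"
    by (rule sum_single[OF fx inK]) (use t0 in \<open>auto intro: sum.neutral\<close>)
  also have "\<dots> = x (L K) * y (L M) * lco (L K) (L M) (K + M)"
    by (rule sum_single[OF fy inM]) (use t0 in auto)
  also have "\<dots> = x (L K) * y (L M) * of_real (K - M)" by (simp add: lco_def)
  finally show ?thesis .
qed

lemma iter_top:
  assumes fw: "finite (supp w)" and wG: "\<forall>r. w (G r) = 0" and wK: "w (L K) \<noteq> 0" and Kp: "K > 0"
    and wa: "\<forall>a>K. w (L a) = 0"
  shows "finite (supp ((sbracket w ^^ j) (e (L (K+1))))) \<and> (sbracket w ^^ j) (e (L (K+1))) (L (K + 1 + real j * K)) \<noteq> 0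
     \<and> (\<forall>n > K + 1 + real j * K. (sbracket w ^^ j) (e (L (K+1))) (L n) = 0)"
proof (induction j)
  case 0
  have "finite (supp (e (L (K+1))))" "finite (supp (e (L (K-1))))" by simp_all
  then show ?case by (auto simp: e_def)
next
  case (Suc j)
  define v where "v = (sbracket w ^^ j) (e (L (K+1)))"
  define M where "M = K + 1 + real j * K"
  from Suc have fv: "finite (supp v)" and v0: "v (L M) \<noteq> 0" and vz: "\<forall>n>M. v (L n) = 0"
    unfolding v_def M_def by blast+
  have eq: "(sbracket w ^^ Suc j) (e (L (K+1))) = sbracket w v" by (simp add: v_def)
  have idx: "K + 1 + real (Suc j) * K = K + M" by (simp add: M_def algebra_simps)
  have lead: "sbracket w v (L (K + M)) = w (L K) * v (L M) * of_real (K - M)"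
    by (rule sbr_top_lead[OF fw fv wG wa vz wK v0])
  have "real j * K \<ge> 0" using Kp by simp
  then have "K - M < 0" by (simp add: M_def)
  then have "of_real (K - M) \<noteq> (0::complex)" by simp
  then have nz: "sbracket w v (L (K + M)) \<noteq> 0" using lead wK v0 by simp
  have zz: "\<forall>n > K + M. sbracket w v (L n) = 0" using sbr_top_zero[OF fw fv wG wa vz] by blast
  show ?case unfolding eq idx using nz zz finite_supp_sbr[OF fw fv] by blast
qed

lemma iter_bot:
  assumes fw: "finite (supp w)" and wG: "\<forall>r. w (G r) = 0" and wK: "w (L K) \<noteq> 0" and Kp: "K < 0"
    and wa: "\<forall>a<K. w (L a) = 0"
  shows "finite (supp ((sbracket w ^^ j) (e (L (K-1))))) \<and> (sbracket w ^^ j) (e (L (K-1))) (L (K - 1 + real j * K)) \<noteq> 0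
     \<and> (\<forall>n < K - 1 + real j * K. (sbracket w ^^ j) (e (L (K-1))) (L n) = 0)"
proof (induction j)
  case 0
  have "finite (supp (e (L (K+1))))" "finite (supp (e (L (K-1))))" by simp_all
  then show ?case by (auto simp: e_def)
next
  case (Suc j)
  define v where "v = (sbracket w ^^ j) (e (L (K-1)))"
  define M where "M = K - 1 + real j * K"
  from Suc have fv: "finite (supp v)" and v0: "v (L M) \<noteq> 0" and vz: "\<forall>n<M. v (L n) = 0"
    unfolding v_def M_def by blast+
  have eq: "(sbracket w ^^ Suc j) (e (L (K-1))) = sbracket w v" by (simp add: v_def)
  have idx: "K - 1 + real (Suc j) * K = K + M" by (simp add: M_def algebra_simps)
  have lead: "sbracket w v (L (K + M)) = w (L K) * v (L M) * of_real (K - M)"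
    by (rule sbr_bot_lead[OF fw fv wG wa vz wK v0])
  have "real j * K \<le> 0" using Kp by (simp add: mult_nonneg_nonpos)
  then have "K - M > 0" by (simp add: M_def)
  then have "of_real (K - M) \<noteq> (0::complex)" by simp
  then have nz: "sbracket w v (L (K + M)) \<noteq> 0" using lead wK v0 by simp
  have zz: "\<forall>n < K + M. sbracket w v (L n) = 0" using sbr_bot_zero[OF fw fv wG wa vz] by blast
  show ?case unfolding eq idx using nz zz finite_supp_sbr[OF fw fv] by blast
qed

lemma infinite_orbit:
  assumes "\<And>j::nat. f j \<in> supp ((sbracket w ^^ j) y)" "inj f"
  shows "infinite (\<Union>j. supp ((sbracket w ^^ j) y))"
proof
  assume fin: "finite (\<Union>j. supp ((sbracket w ^^ j) y))"
  have "range f \<subseteq> (\<Union>j. supp ((sbracket w ^^ j) y))" using assms(1) by blast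
  then have "finite (range f)" using fin finite_subset by blast
  then have "finite (UNIV :: nat set)" using finite_imageD assms(2) by blast
  then show False by simp
qed

lemma no_top:
  assumes fw: "finite (supp w)" and wG: "\<forall>r. w (G r) = 0" and wK: "w (L K) \<noteq> 0" and Kp: "K > 0"
    and wa: "\<forall>a>K. w (L a) = 0"
  shows "infinite (\<Union>j. supp ((sbracket w ^^ j) (e (L (K+1)))))"
proof (rule infinite_orbit)
  fix j :: nat
  show "L (K + 1 + real j * K) \<in> supp ((sbracket w ^^ j) (e (L (K+1))))"
    using iter_top[OF assms, of j] by (simp add: supp_def)
  show "inj (\<lambda>j::nat. L (K + 1 + real j * K))"
    using Kp by (auto simp: inj_def)
qed

lemma no_bot:
  assumes fw: "finite (supp w)" and wG: "\<forall>r. w (G r) = 0" and wK: "w (L K) \<noteq> 0" and Kp: "K < 0"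
    and wa: "\<forall>a<K. w (L a) = 0"
  shows "infinite (\<Union>j. supp ((sbracket w ^^ j) (e (L (K-1)))))"
proof (rule infinite_orbit)
  fix j :: nat
  show "L (K - 1 + real j * K) \<in> supp ((sbracket w ^^ j) (e (L (K-1))))"
    using iter_bot[OF assms, of j] by (simp add: supp_def)
  show "inj (\<lambda>j::nat. L (K - 1 + real j * K))"
    using Kp by (auto simp: inj_def)
qed

lemma SF:
  assumes g: "eps = 0 \<or> eps = 1/2" and A: "svir_aut eps \<sigma>" and z: "z \<in> svir_carrier eps"
  shows "finite (\<Union>j. supp ((sbracket (\<sigma> (e (L 0))) ^^ j) z))"
proof -
  obtain z' where z': "z' \<in> svir_carrier eps" "\<sigma> z' = z" using aut_surj[OF A z] by blast
  have fz: "finite (supp z')" using z' car_finite by blast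
  define u where "u j = (\<lambda>w. (- of_real (dg w)) ^ j * z' w)" for j
  have su: "supp (u j) \<subseteq> supp z'" for j by (auto simp: u_def supp_def)
  have uc: "u j \<in> svir_carrier eps" for j
    using su[of j] z' fz unfolding car_iff by (auto intro: finite_subset)
  have L0c: "e (L 0) \<in> svir_carrier eps" by simp
  have it: "(sbracket (\<sigma> (e (L 0))) ^^ j) z = \<sigma> (u j)" for j
  proof (induction j)
    case 0 then show ?case using z' by (simp add: u_def)
  next
    case (Suc j)
    have "(sbracket (\<sigma> (e (L 0))) ^^ Suc j) z = sbracket (\<sigma> (e (L 0))) (\<sigma> (u j))" using Suc by simp
    also have "\<dots> = \<sigma> (sbracket (e (L 0)) (u j))" using aut_br[OF A L0c uc] by simp
    also have "sbracket (e (L 0)) (u j) = u (Suc j)"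
      using sbr_L0[OF finite_subset[OF su fz]] by (simp add: u_def mult.assoc)
    finally show ?case .
  qed
  have vz: "\<forall>b\<in>supp z'. valid eps b" using z' by (simp add: car_iff)
  have "supp (\<sigma> (u j)) \<subseteq> (\<Union>b\<in>supp z'. supp (\<sigma> (e b)))" for j
    by (rule supp_aut_sub[OF A uc fz su vz])
  then have "(\<Union>j. supp ((sbracket (\<sigma> (e (L 0))) ^^ j) z)) \<subseteq> (\<Union>b\<in>supp z'. supp (\<sigma> (e b)))"
    unfolding it by blast
  moreover have "finite (\<Union>b\<in>supp z'. supp (\<sigma> (e b)))"
  proof (rule finite_UN_I[OF fz])
    fix b assume "b \<in> supp z'"
    then have "e b \<in> svir_carrier eps" using vz by simp
    then show "finite (supp (\<sigma> (e b)))" using car_finite[OF aut_car[OF A]] by blast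
  qed
  ultimately show ?thesis using finite_subset by blast
qed

lemma e_even: "svir_even (e (L m))" "svir_even (e C)" by (auto simp: e_def svir_even_def)
lemma e_odd: "svir_odd (e (G r))" by (auto simp: e_def svir_odd_def)

lemma inj_L: "inj L" by (auto simp: inj_def)

lemma eigen:
  assumes A: "svir_aut eps \<sigma>" and w: "\<sigma> (e (L 0)) = (\<lambda>b. \<alpha> * e (L 0) b + \<beta> * e C b)"
    and vb0: "valid eps b0" and nz: "\<sigma> (e b0) b \<noteq> 0"
  shows "\<alpha> * of_real (dg b) = of_real (dg b0)"
proof -
  have c0: "e (L 0) \<in> svir_carrier eps" by simp
  have cb: "e b0 \<in> svir_carrier eps" using vb0 by simp
  have fv: "finite (supp (\<sigma> (e b0)))" using car_finite[OF aut_car[OF A cb]] .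
  have "sbracket (e (L 0)) (e b0) = (\<lambda>w. - of_real (dg w) * e b0 w)" by (rule sbr_L0) simp
  also have "\<dots> = (\<lambda>w. - of_real (dg b0) * e b0 w)" by (auto simp: e_def)
  finally have h: "sbracket (e (L 0)) (e b0) = (\<lambda>w. (- of_real (dg b0)) * e b0 w)" .
  have "\<sigma> (sbracket (e (L 0)) (e b0)) = (\<lambda>w. (- of_real (dg b0)) * \<sigma> (e b0) w)"
    unfolding h by (rule aut_smult[OF A cb])
  then have "sbracket (\<sigma> (e (L 0))) (\<sigma> (e b0)) = (\<lambda>w. - of_real (dg b0) * \<sigma> (e b0) w)"
    using aut_br[OF A c0 cb] by simp
  moreover have "sbracket (\<sigma> (e (L 0))) (\<sigma> (e b0)) = (\<lambda>w. \<alpha> * (- of_real (dg w)) * \<sigma> (e b0) w)"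
    unfolding w by (rule sbr_L0C[OF fv])
  ultimately have "\<alpha> * (- of_real (dg b)) * \<sigma> (e b0) b = - of_real (dg b0) * \<sigma> (e b0) b"
    by metis
  then show ?thesis using nz by simp
qed

lemma aut_L0:
  assumes g: "eps = 0 \<or> eps = 1/2" and A: "svir_aut eps \<sigma>"
  shows "\<exists>m::real. (m = 1 \<or> m = -1) \<and> \<sigma> (e (L 0)) = (\<lambda>b. of_real m * e (L 0) b)"
proof -
  define w where "w = \<sigma> (e (L 0))"
  have c0: "e (L 0) \<in> svir_carrier eps" by simp
  have wc: "w \<in> svir_carrier eps" using aut_car[OF A c0] by (simp add: w_def)
  have fw: "finite (supp w)" using car_finite[OF wc] .
  have wG: "\<forall>r. w (G r) = 0" using aut_even[OF A c0 e_even(1)] by (simp add: w_def svir_even_def)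
  have SFw: "finite (\<Union>j. supp ((sbracket w ^^ j) z))" if "z \<in> svir_carrier eps" for z
    using SF[OF g A that] by (simp add: w_def)
  have fS0: "finite (L -` supp w)" by (rule finite_vimageI[OF fw inj_L])
  have pos: "\<forall>k>0. w (L k) = 0"
  proof (rule ccontr)
    assume "\<not> (\<forall>k>0. w (L k) = 0)"
    define S where "S = {k. k > 0 \<and> w (L k) \<noteq> 0}"
    have Sne: "S \<noteq> {}" using \<open>\<not> (\<forall>k>0. w (L k) = 0)\<close> by (auto simp: S_def)
    have "S \<subseteq> L -` supp w" by (auto simp: S_def supp_def)
    then have fS: "finite S" using fS0 finite_subset by blast
    define K where "K = Max S"
    have KS: "K \<in> S" using Max_in[OF fS Sne] by (simp add: K_def)
    then have Kp: "K > 0" and wK: "w (L K) \<noteq> 0" by (auto simp: S_def)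
    have wa: "\<forall>a>K. w (L a) = 0"
    proof (intro allI impI)
      fix a assume "a > K"
      show "w (L a) = 0"
      proof (rule ccontr)
        assume "w (L a) \<noteq> 0"
        then have "a \<in> S" using \<open>a > K\<close> Kp by (simp add: S_def)
        then have "a \<le> K" using Max_ge[OF fS] by (simp add: K_def)
        then show False using \<open>a > K\<close> by simp
      qed
    qed
    have "K \<in> \<int>" using car_valid[OF wc wK] by simp
    then have "e (L (K+1)) \<in> svir_carrier eps" by simp
    then show False using SFw no_top[OF fw wG wK Kp wa] by blast
  qed
  have neg: "\<forall>k<0. w (L k) = 0"
  proof (rule ccontr)
    assume "\<not> (\<forall>k<0. w (L k) = 0)"
    define S where "S = {k. k < 0 \<and> w (L k) \<noteq> 0}"
    have Sne: "S \<noteq> {}" using \<open>\<not> (\<forall>k<0. w (L k) = 0)\<close> by (auto simp: S_def)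
    have "S \<subseteq> L -` supp w" by (auto simp: S_def supp_def)
    then have fS: "finite S" using fS0 finite_subset by blast
    define K where "K = Min S"
    have KS: "K \<in> S" using Min_in[OF fS Sne] by (simp add: K_def)
    then have Kp: "K < 0" and wK: "w (L K) \<noteq> 0" by (auto simp: S_def)
    have wa: "\<forall>a<K. w (L a) = 0"
    proof (intro allI impI)
      fix a assume "a < K"
      show "w (L a) = 0"
      proof (rule ccontr)
        assume "w (L a) \<noteq> 0"
        then have "a \<in> S" using \<open>a < K\<close> Kp by (simp add: S_def)
        then have "a \<ge> K" using Min_le[OF fS] by (simp add: K_def)
        then show False using \<open>a < K\<close> by simp
      qed
    qed
    have "K \<in> \<int>" using car_valid[OF wc wK] by simp
    then have "e (L (K-1)) \<in> svir_carrier eps" by simp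
    then show False using SFw no_bot[OF fw wG wK Kp wa] by blast
  qed
  define \<alpha> where "\<alpha> = w (L 0)"
  define \<beta> where "\<beta> = w C"
  have wform: "w = (\<lambda>b. \<alpha> * e (L 0) b + \<beta> * e C b)"
  proof
    fix b show "w b = \<alpha> * e (L 0) b + \<beta> * e C b"
    proof (cases b)
      case (L k)
      show ?thesis
      proof (cases "k = 0")
        case True then show ?thesis using L by (simp add: e_def \<alpha>_def)
      next
        case False
        then have "w (L k) = 0" using pos neg by (meson linorder_neqE_linordered_idom)
        then show ?thesis using L False by (simp add: e_def)
      qed
    next
      case (G r) then show ?thesis using wG by (simp add: e_def)
    next
      case C then show ?thesis by (simp add: e_def \<beta>_def)
    qed
  qed
  have w': "\<sigma> (e (L 0)) = (\<lambda>b. \<alpha> * e (L 0) b + \<beta> * e C b)" using wform by (simp add: w_def)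
  have eig: "\<alpha> * of_real (dg b) = of_real (dg b0)" if "valid eps b0" "\<sigma> (e b0) b \<noteq> 0" for b0 b
    using eigen[OF A w' that] .
  have c1: "e (L 1) \<in> svir_carrier eps" by simp
  have cm1: "e (L (-1)) \<in> svir_carrier eps" by simp
  have ne1: "e (L 1) \<noteq> (\<lambda>w. 0)" by (metis e_def zero_neq_one)
  have v1nz: "\<sigma> (e (L 1)) \<noteq> (\<lambda>w. 0)" using aut_zero_iff[OF A c1] ne1 by blast
  then obtain b1 where b1: "\<sigma> (e (L 1)) b1 \<noteq> 0" by auto
  have v1ev: "svir_even (\<sigma> (e (L 1)))" using aut_even[OF A c1 e_even(1)] .
  have eb1: "\<alpha> * of_real (dg b1) = 1" using eig[OF _ b1] by simp
  obtain n where n: "b1 = L n"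
  proof (cases b1)
    case (G r) then show ?thesis using v1ev b1 by (simp add: svir_even_def)
  next
    case C then show ?thesis using eb1 by simp
  qed auto
  have nZ: "n \<in> \<int>" using car_valid[OF aut_car[OF A c1] b1] n by simp
  have an: "\<alpha> * of_real n = 1" using eb1 n by simp
  obtain z where z: "z \<in> svir_carrier eps" "\<sigma> z = e (L 1)" using aut_surj[OF A c1] by blast
  have zev: "svir_even z" using reflect_even[OF A z(1)] z(2) e_even(1) by simp
  have fz: "finite (supp z)" using car_finite[OF z(1)] .
  have "\<sigma> (sbracket (e (L 0)) z) = sbracket w (e (L 1))" using aut_br[OF A c0 z(1)] z(2) by (simp add: w_def)
  also have "\<dots> = (\<lambda>b. \<alpha> * (- of_real (dg b)) * e (L 1) b)" unfolding wform by (rule sbr_L0C) simp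
  also have "\<dots> = (\<lambda>b. (- \<alpha>) * \<sigma> z b)" using z(2) by (auto simp: e_def)
  also have "\<dots> = \<sigma> (\<lambda>b. (- \<alpha>) * z b)" by (rule aut_smult[OF A z(1), symmetric])
  finally have "sbracket (e (L 0)) z = (\<lambda>b. (- \<alpha>) * z b)"
    using aut_inj[OF A car_sbr[OF g c0 z(1)] car_smult[OF z(1)]] by blast
  then have zeig: "- of_real (dg b) * z b = (- \<alpha>) * z b" for b
    using sbr_L0[OF fz] by metis
  have "z \<noteq> (\<lambda>w. 0)" using z(2) ne1 aut_zero[OF A] by auto
  then obtain b2 where b2: "z b2 \<noteq> 0" by auto
  have db2: "of_real (dg b2) = \<alpha>" using zeig[of b2] b2 by simp
  obtain m where m: "b2 = L m"
  proof (cases b2)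
    case (G r) then show ?thesis using zev b2 by (simp add: svir_even_def)
  next
    case C then show ?thesis using db2 an by simp
  qed auto
  have mZ: "m \<in> \<int>" using car_valid[OF z(1) b2] m by simp
  have am: "\<alpha> = of_real m" using db2 m by simp
  have "of_real (m * n) = (1::complex)" using an am by simp
  then have mn: "m * n = 1" using of_real_eq_1_iff by blast
  have m1: "m = 1 \<or> m = -1"
  proof -
    obtain i where i: "m = of_int i" using mZ Ints_cases by blast
    obtain j where j: "n = of_int j" using nZ Ints_cases by blast
    have "of_int (i * j) = (1::real)" using mn i j by simp
    then have "i * j = 1" by linarith
    then have "i = 1 \<or> i = -1" using zmult_eq_1_iff by blast
    then show ?thesis using i by auto
  qed
  have mm: "m * m = 1" using m1 by auto
  have v1f: "\<sigma> (e (L 1)) = (\<lambda>b. \<sigma> (e (L 1)) (L m) * e (L m) b)"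
  proof
    fix b show "\<sigma> (e (L 1)) b = \<sigma> (e (L 1)) (L m) * e (L m) b"
    proof (cases "\<sigma> (e (L 1)) b = 0")
      case True then show ?thesis by (auto simp: e_def)
    next
      case False
      have eb: "of_real m * of_real (dg b) = (1::complex)" using eig[OF _ False] am by simp
      show ?thesis
      proof (cases b)
        case (L k)
        then have "m * k = 1" using eb by (metis dg.simps(1) of_real_1 of_real_eq_iff of_real_mult)
        then have "k = m" using m1 by auto
        then show ?thesis using L by (simp add: e_def)
      next
        case (G r) then show ?thesis using v1ev False by (simp add: svir_even_def)
      next
        case C then show ?thesis using eb by simp
      qed
    qed
  qed
  have v2ev: "svir_even (\<sigma> (e (L (-1))))" using aut_even[OF A cm1 e_even(1)] .
  have v2f: "\<sigma> (e (L (-1))) = (\<lambda>b. \<sigma> (e (L (-1))) (L (-m)) * e (L (-m)) b)"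
  proof
    fix b show "\<sigma> (e (L (-1))) b = \<sigma> (e (L (-1))) (L (-m)) * e (L (-m)) b"
    proof (cases "\<sigma> (e (L (-1))) b = 0")
      case True then show ?thesis by (auto simp: e_def)
    next
      case False
      have eb: "of_real m * of_real (dg b) = (-1::complex)" using eig[OF _ False] am by simp
      show ?thesis
      proof (cases b)
        case (L k)
        then have "of_real (m * k) = (of_real (-1) :: complex)" using eb by simp
        then have "m * k = -1" using of_real_eq_iff by blast
        then have "k = -m" using m1 by auto
        then show ?thesis using L by (simp add: e_def)
      next
        case (G r) then show ?thesis using v2ev False by (simp add: svir_even_def)
      next
        case C then show ?thesis using eb by simp
      qed
    qed
  qed
  have bb1: "bb (L 1) (L (-1)) = (\<lambda>b. 2 * e (L 0) b)" by (auto simp: e_def)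
  have "sbracket (\<sigma> (e (L 1))) (\<sigma> (e (L (-1)))) = \<sigma> (bb (L 1) (L (-1)))"
    using aut_br[OF A c1 cm1] sbr_e by simp
  also have "\<dots> = (\<lambda>b. 2 * w b)" unfolding bb1 using aut_smult[OF A c0] by (simp add: w_def)
  finally have eqw: "sbracket (\<sigma> (e (L 1))) (\<sigma> (e (L (-1)))) = (\<lambda>b. 2 * w b)" .
  have "sbracket (\<sigma> (e (L 1))) (\<sigma> (e (L (-1)))) C =
      \<sigma> (e (L 1)) (L m) * \<sigma> (e (L (-1))) (L (-m)) * bb (L m) (L (-m)) C"
    by (subst v1f, subst v2f, subst sbr_scaled) simp
  also have "bb (L m) (L (-m)) C = 0" using m1 by auto
  finally have "2 * w C = 0" using eqw by (metis mult_zero_right)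
  then have b0: "\<beta> = 0" by (simp add: \<beta>_def)
  show ?thesis
  proof (intro exI conjI)
    show "m = 1 \<or> m = -1" by (fact m1)
    show "\<sigma> (e (L 0)) = (\<lambda>b. of_real m * e (L 0) b)" using w' b0 am by simp
  qed
qed

definition x1 :: "real \<Rightarrow> svir" where "x1 eps = (\<lambda>b. (\<lambda>b. e (L 1) b + e (L 2) b) b + e (G eps) b)"

lemma x1_car: "x1 eps \<in> svir_carrier eps"
  unfolding x1_def by (intro car_add) auto

lemma stab:
  assumes g: "eps = 0 \<or> eps = 1/2" and A: "svir_aut eps \<sigma>" and fx: "\<sigma> (x1 eps) = x1 eps"
  shows "\<forall>z\<in>svir_carrier eps. \<sigma> z = z"
proof -
  obtain m :: real where m1: "m = 1 \<or> m = -1" and w: "\<sigma> (e (L 0)) = (\<lambda>b. of_real m * e (L 0) b)"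
    using aut_L0[OF g A] by blast
  have w': "\<sigma> (e (L 0)) = (\<lambda>b. of_real m * e (L 0) b + 0 * e C b)" using w by simp
  have eig: "m * dg b = dg b0" if "valid eps b0" "\<sigma> (e b0) b \<noteq> 0" for b0 b
  proof -
    have "of_real m * of_real (dg b) = (of_real (dg b0) :: complex)" using eigen[OF A w' that] .
    then have "of_real (m * dg b) = (of_real (dg b0) :: complex)" by simp
    then show ?thesis using of_real_eq_iff by blast
  qed
  have mm: "m * m = 1" using m1 by auto
  have Lf: "\<sigma> (e (L k)) = (\<lambda>b. \<sigma> (e (L k)) (L (m*k)) * e (L (m*k)) b)" if kZ: "k \<in> \<int>" and k0: "k \<noteq> 0" for k
  proof
    have ck: "e (L k) \<in> svir_carrier eps" using kZ by simp
    have vev: "svir_even (\<sigma> (e (L k)))" using aut_even[OF A ck e_even(1)] .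
    fix b show "\<sigma> (e (L k)) b = \<sigma> (e (L k)) (L (m*k)) * e (L (m*k)) b"
    proof (cases "\<sigma> (e (L k)) b = 0")
      case True then show ?thesis by (auto simp: e_def)
    next
      case False
      have eb: "m * dg b = k" using eig[OF _ False] kZ by simp
      show ?thesis
      proof (cases b)
        case (L j)
        then have "m * j = k" using eb by simp
        then have "j = m * k" using m1 by auto
        then show ?thesis using L by (simp add: e_def)
      next
        case (G r) then show ?thesis using vev False by (simp add: svir_even_def)
      next
        case C then show ?thesis using eb k0 by simp
      qed
    qed
  qed
  have Gf: "\<sigma> (e (G r)) = (\<lambda>b. \<sigma> (e (G r)) (G (m*r)) * e (G (m*r)) b)" if rv: "valid eps (G r)" for r
  proof
    have cr: "e (G r) \<in> svir_carrier eps" using rv by simp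
    have vod: "svir_odd (\<sigma> (e (G r)))" using aut_odd[OF A cr e_odd] .
    fix b show "\<sigma> (e (G r)) b = \<sigma> (e (G r)) (G (m*r)) * e (G (m*r)) b"
    proof (cases "\<sigma> (e (G r)) b = 0")
      case True then show ?thesis by (auto simp: e_def)
    next
      case False
      have eb: "m * dg b = r" using eig[OF rv False] by simp
      show ?thesis
      proof (cases b)
        case (G s)
        then have "m * s = r" using eb by simp
        then have "s = m * r" using m1 by auto
        then show ?thesis using G by (simp add: e_def)
      next
        case (L j) then show ?thesis using vod False by (simp add: svir_odd_def)
      next
        case C then show ?thesis using vod False by (simp add: svir_odd_def)
      qed
    qed
  qed
  have c1: "e (L 1) \<in> svir_carrier eps" and c2: "e (L 2) \<in> svir_carrier eps"
    and cG: "e (G eps) \<in> svir_carrier eps" by simp_all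
  have sx: "\<sigma> (x1 eps) = (\<lambda>b. (\<sigma> (e (L 1)) b + \<sigma> (e (L 2)) b) + \<sigma> (e (G eps)) b)"
    unfolding x1_def using aut_add[OF A car_add[OF c1 c2] cG] aut_add[OF A c1 c2] by simp
  have vL1: "\<sigma> (x1 eps) b = \<sigma> (e (L 1)) (L m) * e (L m) b + \<sigma> (e (L 2)) (L (m*2)) * e (L (m*2)) b
      + \<sigma> (e (G eps)) (G (m*eps)) * e (G (m*eps)) b" for b
  proof -
    have i2: "(2::real) \<in> \<int>" by simp
    have f1: "\<sigma> (e (L 1)) b = \<sigma> (e (L 1)) (L m) * e (L m) b"
      using fun_cong[OF Lf[OF Ints_1 one_neq_zero], of b] by simp
    have f2: "\<sigma> (e (L 2)) b = \<sigma> (e (L 2)) (L (m*2)) * e (L (m*2)) b"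
      using fun_cong[OF Lf[OF i2], of b] by simp
    have f3: "\<sigma> (e (G eps)) b = \<sigma> (e (G eps)) (G (m*eps)) * e (G (m*eps)) b"
      using fun_cong[OF Gf, of eps b] by simp
    show ?thesis unfolding sx using f1 f2 f3 by simp
  qed
  have m_pos: "m = 1"
  proof (rule ccontr)
    assume "m \<noteq> 1" then have "m = -1" using m1 by simp
    then have "\<sigma> (x1 eps) (L 1) = 0" using vL1[of "L 1"] by (simp add: e_def)
    moreover have "x1 eps (L 1) = 1" by (simp add: x1_def e_def)
    ultimately show False using fx by simp
  qed
  define c where "c k = \<sigma> (e (L k)) (L k)" for k
  define d where "d r = \<sigma> (e (G r)) (G r)" for r
  have Lf1: "\<sigma> (e (L k)) = (\<lambda>b. c k * e (L k) b)" if "k \<in> \<int>" for k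
  proof (cases "k = 0")
    case True then show ?thesis using w m_pos by (simp add: c_def e_def)
  next
    case False then show ?thesis using Lf[OF that False] m_pos by (simp add: c_def)
  qed
  have Gf1: "\<sigma> (e (G r)) = (\<lambda>b. d r * e (G r) b)" if "valid eps (G r)" for r
    using Gf[OF that] m_pos by (simp add: d_def)
  have c1v: "c 1 = 1" using vL1[of "L 1"] fx m_pos by (simp add: e_def c_def x1_def)
  have c2v: "c 2 = 1" using vL1[of "L 2"] fx m_pos by (simp add: e_def c_def x1_def)
  have dv: "d eps = 1" using vL1[of "G eps"] fx m_pos by (simp add: e_def d_def x1_def)
  have crec: "c (a + b) = c a * c b" if aZ: "a \<in> \<int>" and bZ: "b \<in> \<int>" and ab: "a \<noteq> b" and s0: "a + b \<noteq> 0" for a b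
  proof -
    have ca: "e (L a) \<in> svir_carrier eps" and cb: "e (L b) \<in> svir_carrier eps" using aZ bZ by simp_all
    have cab: "e (L (a+b)) \<in> svir_carrier eps" using aZ bZ by simp
    have bbf: "bb (L a) (L b) = (\<lambda>w. of_real (a - b) * e (L (a+b)) w)" using s0 by (auto simp: e_def)
    have "\<sigma> (bb (L a) (L b)) = sbracket (\<sigma> (e (L a))) (\<sigma> (e (L b)))" using aut_br[OF A ca cb] sbr_e by simp
    also have "\<dots> = (\<lambda>w. c a * c b * bb (L a) (L b) w)" using Lf1[OF aZ] Lf1[OF bZ] sbr_scaled by simp
    finally have h1: "\<sigma> (bb (L a) (L b)) = (\<lambda>w. c a * c b * bb (L a) (L b) w)" .
    have "\<sigma> (bb (L a) (L b)) = (\<lambda>w. of_real (a - b) * \<sigma> (e (L (a+b))) w)"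
      unfolding bbf by (rule aut_smult[OF A cab])
    also have "\<dots> = (\<lambda>w. of_real (a - b) * (c (a+b) * e (L (a+b)) w))" using Lf1[of "a+b"] aZ bZ by simp
    finally have h2: "\<sigma> (bb (L a) (L b)) = (\<lambda>w. of_real (a - b) * (c (a+b) * e (L (a+b)) w))" .
    have "of_real (a - b) * c (a+b) = c a * c b * of_real (a - b)"
      using fun_cong[OF h1, of "L (a+b)"] fun_cong[OF h2, of "L (a+b)"] bbf by (simp add: e_def) metis
    moreover have "of_real (a - b) \<noteq> (0::complex)" using ab by simp
    ultimately show ?thesis by (simp add: mult.commute)
  qed
  have cpos: "c (real n + 1) = 1" for n :: nat
  proof (induction n)
    case 0 then show ?case using c1v by simp
  next
    case (Suc n)
    show ?case
    proof (cases "n = 0")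
      case True then show ?thesis using c2v by simp
    next
      case False
      then have "real n + 1 \<noteq> 1" by simp
      then have "c ((real n + 1) + 1) = c (real n + 1) * c 1"
        by (intro crec) auto
      then show ?thesis using Suc c1v by (simp add: add.commute add.left_commute)
    qed
  qed
  have cm1: "c (-1) = 1"
  proof -
    have "c (-1 + 2) = c (-1) * c 2" by (rule crec) auto
    then show ?thesis using c1v c2v by simp
  qed
  have cneg: "c (- real n - 1) = 1" for n :: nat
  proof (induction n)
    case 0 then show ?case using cm1 by simp
  next
    case (Suc n)
    have h: "c ((- real n - 2) + 1) = c (- real n - 2) * c 1"
      by (rule crec) auto
    have "(- real n - 2) + 1 = - real n - 1" by simp
    then have "c (- real n - 1) = c (- real n - 2)" using h c1v by (simp only: mult_1_right)
    then have "c (- real n - 2) = 1" using Suc by simp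
    moreover have "- real (Suc n) - 1 = - real n - 2" by simp
    ultimately show ?case by (simp only:)
  qed
  have call: "c k = 1" if "k \<in> \<int>" for k
  proof -
    from that obtain i where i: "k = of_int i" by (rule Ints_cases)
    consider "i \<ge> 1" | "i = 0" | "i \<le> -1" by linarith
    then show ?thesis
    proof cases
      case 1
      then have "real (nat (i - 1)) = of_int (i - 1)" by simp
      then have "k = real (nat (i - 1)) + 1" using i by simp
      then show ?thesis using cpos[of "nat (i - 1)"] by (simp only:)
    next
      case 2
      then have k0: "k = 0" using i by simp
      have "c 0 = 1" unfolding c_def w by (simp add: e_def m_pos)
      then show ?thesis using k0 by (simp only:)
    next
      case 3
      then have "real (nat (- i - 1)) = of_int (- i - 1)" by simp
      then have "k = - real (nat (- i - 1)) - 1" using i by simp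
      then show ?thesis using cneg[of "nat (- i - 1)"] by (simp only:)
    qed
  qed
  have Lid: "\<sigma> (e (L k)) = e (L k)" if "k \<in> \<int>" for k
    using Lf1[OF that] call[OF that] by (simp add: e_def)
  have drec: "d r * d s = 1" if rv: "valid eps (G r)" and sv: "valid eps (G s)" and s0: "r + s \<noteq> 0" for r s
  proof -
    have cr: "e (G r) \<in> svir_carrier eps" and cs: "e (G s) \<in> svir_carrier eps" using rv sv by simp_all
    have "(r - eps) + (s - eps) + 2 * eps \<in> \<int>" using rv sv Ints_2eps[OF g] by (intro Ints_add) auto
    then have rsZ: "r + s \<in> \<int>" by simp
    have crs: "e (L (r+s)) \<in> svir_carrier eps" using rsZ by simp
    have bbf: "bb (G r) (G s) = (\<lambda>w. 2 * e (L (r+s)) w)" using s0 by (auto simp: e_def)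
    have "\<sigma> (bb (G r) (G s)) = sbracket (\<sigma> (e (G r))) (\<sigma> (e (G s)))" using aut_br[OF A cr cs] sbr_e by simp
    also have "\<dots> = (\<lambda>w. d r * d s * bb (G r) (G s) w)" using Gf1[OF rv] Gf1[OF sv] sbr_scaled by simp
    finally have h1: "\<sigma> (bb (G r) (G s)) = (\<lambda>w. d r * d s * bb (G r) (G s) w)" .
    have "\<sigma> (bb (G r) (G s)) = (\<lambda>w. 2 * \<sigma> (e (L (r+s))) w)"
      unfolding bbf by (rule aut_smult[OF A crs])
    also have "\<dots> = (\<lambda>w. 2 * e (L (r+s)) w)" using Lid[OF rsZ] by simp
    finally have h2: "\<sigma> (bb (G r) (G s)) = (\<lambda>w. 2 * e (L (r+s)) w)" .
    show ?thesis using fun_cong[OF h1, of "L (r+s)"] fun_cong[OF h2, of "L (r+s)"] bbf by (simp add: e_def)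
  qed
  have dall: "d r = 1" if rv: "valid eps (G r)" for r
  proof (cases "r = - eps")
    case False
    then have "r + eps \<noteq> 0" by simp
    moreover have "valid eps (G eps)" by simp
    ultimately have "d r * d eps = 1" using drec[OF rv] by blast
    then show ?thesis using dv by simp
  next
    case True
    have sv: "valid eps (G (eps + 1))" by simp
    have "eps + 1 \<noteq> - eps" using g by auto
    then have "eps + 1 + eps \<noteq> 0" by simp
    then have "d (eps + 1) = 1" using drec[OF sv, of eps] dv by simp
    moreover have "r + (eps + 1) \<noteq> 0" using True by simp
    ultimately show ?thesis using drec[OF rv sv] by simp
  qed
  have Gid: "\<sigma> (e (G r)) = e (G r)" if "valid eps (G r)" for r
    using Gf1[OF that] dall[OF that] by (simp add: e_def)
  have Cid: "\<sigma> (e C) = e C"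
  proof -
    have c2': "e (L 2) \<in> svir_carrier eps" and cm2: "e (L (-2)) \<in> svir_carrier eps"
      and c0: "e (L 0) \<in> svir_carrier eps" and cC: "e C \<in> svir_carrier eps" by simp_all
    have bbf: "bb (L 2) (L (-2)) = (\<lambda>w. (\<lambda>w. 4 * e (L 0) w) w + (\<lambda>w. (1/2) * e C w) w)"
      by (auto simp: e_def)
    have "\<sigma> (bb (L 2) (L (-2))) = sbracket (\<sigma> (e (L 2))) (\<sigma> (e (L (-2))))" using aut_br[OF A c2' cm2] sbr_e by simp
    also have "\<dots> = bb (L 2) (L (-2))" using Lid[of 2] Lid[of "-2"] sbr_e by simp
    finally have h1: "\<sigma> (bb (L 2) (L (-2))) = bb (L 2) (L (-2))" .
    have "\<sigma> (bb (L 2) (L (-2))) = (\<lambda>w. \<sigma> (\<lambda>w. 4 * e (L 0) w) w + \<sigma> (\<lambda>w. (1/2) * e C w) w)"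
      unfolding bbf by (rule aut_add[OF A car_smult[OF c0] car_smult[OF cC]])
    also have "\<dots> = (\<lambda>w. 4 * \<sigma> (e (L 0)) w + (1/2) * \<sigma> (e C) w)"
      by (simp only: aut_smult[OF A c0, of 4] aut_smult[OF A cC, of "1/2"])
    also have "\<dots> = (\<lambda>w. 4 * e (L 0) w + (1/2) * \<sigma> (e C) w)" using Lid[of 0] by simp
    finally have h2: "bb (L 2) (L (-2)) = (\<lambda>w. 4 * e (L 0) w + (1/2) * \<sigma> (e C) w)" using h1 by simp
    show ?thesis
    proof
      fix u
      have "4 * e (L 0) u + (1/2) * e C u = 4 * e (L 0) u + (1/2) * \<sigma> (e C) u"
        using fun_cong[OF h2[unfolded bbf], of u] by (simp only:)
      then show "\<sigma> (e C) u = e C u" by simp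
    qed
  qed
  have Bid: "\<sigma> (e b) = e b" if "valid eps b" for b
    using that Lid Gid Cid by (cases b) auto
  show ?thesis
  proof
    fix z assume z: "z \<in> svir_carrier eps"
    have fz: "finite (supp z)" and vz: "\<forall>b\<in>supp z. valid eps b" using z by (auto simp: car_iff)
    have "\<sigma> z = (\<lambda>w. \<Sum>b\<in>supp z. z b * \<sigma> (e b) w)" by (rule aut_expand[OF A z fz subset_refl vz])
    also have "\<dots> = (\<lambda>w. \<Sum>b\<in>supp z. z b * e b w)" using vz Bid by simp
    also have "\<dots> = z" using expand[OF fz subset_refl] by simp
    finally show "\<sigma> z = z" .
  qed
qed

theorem theorem5p2:
  fixes eps :: real and \<phi> :: "svir \<Rightarrow> svir"
  assumes "eps = 0 \<or> eps = 1/2"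
    and "svir_2local_aut eps \<phi>"
  shows "svir_aut eps \<phi>"
proof -
  note g = assms(1)
  let ?K = "svir_carrier eps"
  have xc: "x1 eps \<in> ?K" by (rule x1_car)
  obtain \<tau> where tA: "svir_aut eps \<tau>" and tx: "\<phi> (x1 eps) = \<tau> (x1 eps)"
    using assms(2) xc unfolding svir_2local_aut_def by blast
  have "\<phi> y = \<tau> y" if y: "y \<in> ?K" for y
  proof -
    obtain \<theta> where thA: "svir_aut eps \<theta>" and thx: "\<phi> (x1 eps) = \<theta> (x1 eps)" and thy: "\<phi> y = \<theta> y"
      using assms(2) xc y unfolding svir_2local_aut_def by blast
    define \<sigma> where "\<sigma> = (\<lambda>x. inv_into ?K \<tau> (\<theta> x))"
    have sA: "svir_aut eps \<sigma>" unfolding \<sigma>_def by (rule aut_comp[OF aut_inv[OF g tA] thA])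
    have injt: "inj_on \<tau> ?K" using aut_bij[OF tA] by (simp add: bij_betw_def)
    have "\<sigma> (x1 eps) = inv_into ?K \<tau> (\<tau> (x1 eps))" using thx tx by (simp add: \<sigma>_def)
    also have "\<dots> = x1 eps" by (rule inv_into_f_f[OF injt xc])
    finally have "\<sigma> (x1 eps) = x1 eps" .
    then have "\<sigma> y = y" using stab[OF g sA] y by blast
    then have "\<tau> (inv_into ?K \<tau> (\<theta> y)) = \<tau> y" by (simp add: \<sigma>_def)
    moreover have "\<tau> (inv_into ?K \<tau> (\<theta> y)) = \<theta> y"
      using bij_betw_inv_into_right[OF aut_bij[OF tA] aut_car[OF thA y]] .
    ultimately show ?thesis using thy by simp
  qed
  then show ?thesis using aut_transfer[OF g tA] by blast
qed

end
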